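(* Let $\mathcal G=(\mathcal R,c,\mathcal S)$ be a singleton congestion game structure with feasible resource sets $\mathcal R^h$, $h\in\mathcal H$, let $\precsim$ be a weak order on $\mathcal H$ and $\Gamma^{\precsim}$ the associated region, and let $C$ be a cost class of $\precsim$. Then: (a) For every $\mu\in\Gamma^{\precsim}$ and every equilibrium load vector $x$ of $(\mathcal G,\mu)$, the vector $(x_r)_{r\in\mathcal R_C}$ is an equilibrium load vector of the single-commodity singleton game $(\mathcal G_C,\mu_C)$, where $\mu_C:=\sum_{h\in C}\mu^h$. (b) If, for every demand in $\mathbb R_+$, the game $\mathcal G_C$ has a unique equilibrium load vector, then for $\mu\in\Gamma^{\precsim}$ the equilibrium loads $x_r(\mu)$, $r\in\mathcal R_C$, are uniquely determined and can be written as $x_r(\mu)=F_r(\mu_C)$ for nondecreasing functions $F_r:\mathbb R_+\to\mathbb R$; equivalently, the family of maps $\{\mu\mapsto x_r(\mu): r\in\mathcal R_C\}$ is comonotonic on $\Gamma^{\precsim}$.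
   Context: A congestion game structure has a finite set $\mathcal R$ of resources with continuous nondecreasing costs $c_r:\mathbb R_+\to\mathbb R_+$ and a finite set $\mathcal H$ of commodities; it is a singleton congestion game when every feasible strategy of commodity $h$ is a single resource, so its strategy set is identified with a nonempty set $\mathcal R^h\subseteq\mathcal R$. For a demand $\mu\in\mathbb R_+^{\mathcal H}$, a feasible flow assigns $f^h_r\ge0$ to $r\in\mathcal R^h$ with $\sum_{r\in\mathcal R^h}f^h_r=\mu^h$; loads are $x_r=\sum_{h: r\in\mathcal R^h}f^h_r$. A Wardrop equilibrium is a feasible flow such that for each $h$ there is $\lambda^h$ with $c_r(x_r)=\lambda^h$ if $r\in\mathcal R^h$, $f^h_r>0$, and $c_r(x_r)\ge\lambda^h$ for all $r\in\mathcal R^h$; an equilibrium load vector is the load vector of a Wardrop equilibrium. The equilibrium costs $\lambda^h(\mu)$ do not depend on which equilibrium is chosen, so $\mu\mapsto\lambda(\mu)$ is well defined. For a weak order (complete preorder) $\precsim$ on $\mathcal H$, define $\Gamma^{\precsim}=\{\mu\in\mathbb R_+^{\mathcal H}: \lambda^h(\mu)\le\lambda^{h'}(\mu)\iff h\precsim h' \text{ for all } h,h'\in\mathcal H\}$. Write $h\sim h'$ if $h\precsim h'$ and $h'\precsim h$, and $h'\succ h$ if $h\precsim h'$ but not $h'\precsim h$. The equivalence classes of $\sim$ are the cost classes; for a cost class $C$, $h'\succ C$ means $h'\succ h$ for $h\in C$. Set $\mathcal R_C=\big(\bigcup_{h\in C}\mathcal R^h\big)\setminus\big(\bigcup_{h'\succ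 C}\mathcal R^{h'}\big)$. $\mathcal G_C$ denotes the singleton congestion game with resources $\mathcal R_C$ (same costs $c_r$) and a single commodity whose feasible strategies are all singletons $\{r\}$, $r\in\mathcal R_C$. A family of functions $\{\psi_i:\Omega\to\mathbb R\}_{i\in A}$ is comonotonic if $(\psi_i(\omega_1)-\psi_i(\omega_2))(\psi_j(\omega_1)-\psi_j(\omega_2))\ge0$ for all $i,j\in A$ and $\omega_1,\omega_2\in\Omega$. *)

theory Defs
  imports "HOL-Analysis.Analysis"
begin

definition singleton_game ::
  "'r set \<Rightarrow> ('r \<Rightarrow> real \<Rightarrow> real) \<Rightarrow> 'h set \<Rightarrow> ('h \<Rightarrow> 'r set) \<Rightarrow> bool" where
  "singleton_game Res c Com S \<longleftrightarrow>
     finite Res \<and> finite Com \<and>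
     (\<forall>r\<in>Res. continuous_on {0..} (c r) \<and> mono_on {0..} (c r) \<and> (\<forall>t\<ge>0. c r t \<ge> 0)) \<and>
     (\<forall>h\<in>Com. S h \<noteq> {} \<and> S h \<subseteq> Res)"

text \<open>A flow f assigns f h r to commodity h and resource r (only r in S h matters).\<close>

definition feasible_flow ::
  "'h set \<Rightarrow> ('h \<Rightarrow> 'r set) \<Rightarrow> ('h \<Rightarrow> real) \<Rightarrow> ('h \<Rightarrow> 'r \<Rightarrow> real) \<Rightarrow> bool" where
  "feasible_flow Com S \<mu> f \<longleftrightarrow>
     (\<forall>h\<in>Com. (\<forall>r\<in>S h. f h r \<ge> 0) \<and> (\<Sum>r\<in>S h. f h r) = \<mu> h)"

definition load :: "'h set \<Rightarrow> ('h \<Rightarrow> 'r set) \<Rightarrow> ('h \<Rightarrow> 'r \<Rightarrow> real) \<Rightarrow> 'r \<Rightarrow> real" where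
  "load Com S f r = (\<Sum>h\<in>{h\<in>Com. r \<in> S h}. f h r)"

definition wardrop_eq ::
  "('r \<Rightarrow> real \<Rightarrow> real) \<Rightarrow> 'h set \<Rightarrow> ('h \<Rightarrow> 'r set) \<Rightarrow> ('h \<Rightarrow> real)
     \<Rightarrow> ('h \<Rightarrow> 'r \<Rightarrow> real) \<Rightarrow> bool" where
  "wardrop_eq c Com S \<mu> f \<longleftrightarrow>
     feasible_flow Com S \<mu> f \<and>
     (\<forall>h\<in>Com. \<exists>lam::real. \<forall>r\<in>S h.
        (f h r > 0 \<longrightarrow> c r (load Com S f r) = lam) \<and> c r (load Com S f r) \<ge> lam)"

definition eq_load ::
  "'r set \<Rightarrow> ('r \<Rightarrow> real \<Rightarrow> real) \<Rightarrow> 'h set \<Rightarrow> ('h \<Rightarrow> 'r set) \<Rightarrow> ('h \<Rightarrow> real)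
     \<Rightarrow> ('r \<Rightarrow> real) \<Rightarrow> bool" where
  "eq_load Res c Com S \<mu> x \<longleftrightarrow>
     (\<exists>f. wardrop_eq c Com S \<mu> f \<and> (\<forall>r\<in>Res. x r = load Com S f r))"

text \<open>Equilibrium cost of commodity h: the minimal cost over its feasible resources
  at an equilibrium (this is the common value of lambda^h; independence of the
  chosen equilibrium is a known fact, so THE is well defined).\<close>

definition eq_cost ::
  "('r \<Rightarrow> real \<Rightarrow> real) \<Rightarrow> 'h set \<Rightarrow> ('h \<Rightarrow> 'r set) \<Rightarrow> ('h \<Rightarrow> real) \<Rightarrow> 'h \<Rightarrow> real" where
  "eq_cost c Com S \<mu> h =
     (THE l. \<exists>f. wardrop_eq c Com S \<mu> f \<and> l = Min ((\<lambda>r. c r (load Com S f r)) ` S h))"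

definition weak_order_on :: "'h set \<Rightarrow> ('h \<Rightarrow> 'h \<Rightarrow> bool) \<Rightarrow> bool" where
  "weak_order_on Com le \<longleftrightarrow>
     (\<forall>h\<in>Com. \<forall>h'\<in>Com. le h h' \<or> le h' h) \<and>
     (\<forall>h1\<in>Com. \<forall>h2\<in>Com. \<forall>h3\<in>Com. le h1 h2 \<longrightarrow> le h2 h3 \<longrightarrow> le h1 h3)"

definition Gamma_region ::
  "('r \<Rightarrow> real \<Rightarrow> real) \<Rightarrow> 'h set \<Rightarrow> ('h \<Rightarrow> 'r set) \<Rightarrow> ('h \<Rightarrow> 'h \<Rightarrow> bool) \<Rightarrow> ('h \<Rightarrow> real) set" where
  "Gamma_region c Com S le =
     {\<mu>. (\<forall>h\<in>Com. \<mu> h \<ge> 0) \<and>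
          (\<forall>h\<in>Com. \<forall>h'\<in>Com. eq_cost c Com S \<mu> h \<le> eq_cost c Com S \<mu> h' \<longleftrightarrow> le h h')}"

definition cost_class :: "'h set \<Rightarrow> ('h \<Rightarrow> 'h \<Rightarrow> bool) \<Rightarrow> 'h set \<Rightarrow> bool" where
  "cost_class Com le C \<longleftrightarrow> (\<exists>h0\<in>Com. C = {h\<in>Com. le h h0 \<and> le h0 h})"

definition above_class :: "'h set \<Rightarrow> ('h \<Rightarrow> 'h \<Rightarrow> bool) \<Rightarrow> 'h set \<Rightarrow> 'h set" where
  "above_class Com le C = {h'\<in>Com. \<forall>h\<in>C. le h h' \<and> \<not> le h' h}"

definition res_C ::
  "'h set \<Rightarrow> ('h \<Rightarrow> 'r set) \<Rightarrow> ('h \<Rightarrow> 'h \<Rightarrow> bool) \<Rightarrow> 'h set \<Rightarrow> 'r set" where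
  "res_C Com S le C = (\<Union>h\<in>C. S h) - (\<Union>h'\<in>above_class Com le C. S h')"

definition eq_load_single :: "'r set \<Rightarrow> ('r \<Rightarrow> real \<Rightarrow> real) \<Rightarrow> real \<Rightarrow> ('r \<Rightarrow> real) \<Rightarrow> bool" where
  "eq_load_single RC c d x \<longleftrightarrow> eq_load RC c {()} (\<lambda>_. RC) (\<lambda>_. d) x"

definition comonotonic :: "'i set \<Rightarrow> 'w set \<Rightarrow> ('i \<Rightarrow> 'w \<Rightarrow> real) \<Rightarrow> bool" where
  "comonotonic A \<Omega> \<psi> \<longleftrightarrow>
     (\<forall>i\<in>A. \<forall>j\<in>A. \<forall>w1\<in>\<Omega>. \<forall>w2\<in>\<Omega>. (\<psi> i w1 - \<psi> i w2) * (\<psi> j w1 - \<psi> j w2) \<ge> 0)"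

text \<open>The (unique, when it is unique) equilibrium load on r at demand mu.\<close>
definition eq_load_val ::
  "'r set \<Rightarrow> ('r \<Rightarrow> real \<Rightarrow> real) \<Rightarrow> 'h set \<Rightarrow> ('h \<Rightarrow> 'r set) \<Rightarrow> ('h \<Rightarrow> real) \<Rightarrow> 'r \<Rightarrow> real" where
  "eq_load_val Res c Com S \<mu> r = (THE v. \<exists>x. eq_load Res c Com S \<mu> x \<and> x r = v)"

end

theory Submission
  imports Defs "HOL-Analysis.Analysis"
begin

lemma G_diff:
  fixes g :: "real \<Rightarrow> real"
  assumes cont: "continuous_on {0..} g" and mono: "mono_on {0..} g"
    and "0 \<le> a" "a \<le> b"
  shows "g a * (b - a) \<le> integral {0..b} g - integral {0..a} g"
    and "integral {0..b} g - integral {0..a} g \<le> g b * (b - a)"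
proof -
  have int: "g integrable_on {0..b}"
    by (rule integrable_continuous_real, rule continuous_on_subset[OF cont]) auto
  have eq: "integral {0..b} g - integral {0..a} g = integral {a..b} g"
    using Henstock_Kurzweil_Integration.integral_combine[OF assms(3,4) int] by simp
  have intab: "g integrable_on {a..b}"
    by (rule integrable_continuous_real, rule continuous_on_subset[OF cont]) (use assms in auto)
  have "integral {a..b} (\<lambda>_. g a) \<le> integral {a..b} g"
    by (rule integral_le[OF _ intab]) (use assms in \<open>auto intro!: mono_onD[OF mono]\<close>)
  then show "g a * (b - a) \<le> integral {0..b} g - integral {0..a} g"
    using assms eq by (simp add: mult.commute)
  have "integral {a..b} g \<le> integral {a..b} (\<lambda>_. g b)"
    by (rule integral_le[OF intab]) (use assms in \<open>auto intro!: mono_onD[OF mono]\<close>)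
  then show "integral {0..b} g - integral {0..a} g \<le> g b * (b - a)"
    using assms eq by (simp add: mult.commute)
qed

lemma G_cont:
  fixes g :: "real \<Rightarrow> real"
  assumes cont: "continuous_on {0..} g"
  shows "continuous_on {0..M} (\<lambda>t. integral {0..t} g)"
  by (rule indefinite_integral_continuous_1, rule integrable_continuous_real,
      rule continuous_on_subset[OF cont]) auto

lemma compact_box_fun:
  fixes B :: "'a \<Rightarrow> real set"
  assumes "\<And>p. compact (B p)"
  shows "compact {F. \<forall>p. F p \<in> B p}"
proof -
  have "compactin (product_topology (\<lambda>i. euclidean) UNIV) (Pi\<^sub>E UNIV B)"
    using assms by (simp add: compactin_PiE)
  then have "compact (Pi\<^sub>E UNIV B)"
    by (simp add: euclidean_product_topology)
  moreover have "Pi\<^sub>E UNIV B = {F. \<forall>p. F p \<in> B p}"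
    by (auto simp: PiE_iff)
  ultimately show ?thesis by simp
qed

lemma closed_sum_eq:
  fixes A :: "'h \<Rightarrow> 'r set" and Hs :: "'h set"
  shows "closed {F :: 'h \<times> 'r \<Rightarrow> real. \<forall>h\<in>Hs. (\<Sum>r\<in>A h. F (h,r)) = m h}"
proof -
  have "{F :: 'h \<times> 'r \<Rightarrow> real. \<forall>h\<in>Hs. (\<Sum>r\<in>A h. F (h,r)) = m h}
        = (\<Inter>h\<in>Hs. {F. (\<Sum>r\<in>A h. F (h,r)) = m h})" by auto
  moreover have "closed {F :: 'h \<times> 'r \<Rightarrow> real. (\<Sum>r\<in>A h. F (h,r)) = m h}" for h
    by (rule closed_Collect_eq) (auto intro!: continuous_on_sum continuous_on_const)
  ultimately show ?thesis by (auto intro!: closed_INT)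
qed

lemma existence:
  assumes game: "singleton_game Res c Com S" and mu: "\<forall>h\<in>Com. \<mu> h \<ge> 0"
  shows "\<exists>f. wardrop_eq c Com S \<mu> f"
proof -
  from game have finR: "finite Res" and finC: "finite Com"
    and contc: "\<And>r. r \<in> Res \<Longrightarrow> continuous_on {0..} (c r)"
    and monoc: "\<And>r. r \<in> Res \<Longrightarrow> mono_on {0..} (c r)"
    and Sne: "\<And>h. h \<in> Com \<Longrightarrow> S h \<noteq> {}"
    and SR: "\<And>h. h \<in> Com \<Longrightarrow> S h \<subseteq> Res"
    unfolding singleton_game_def by auto
  have finS: "\<And>h. h \<in> Com \<Longrightarrow> finite (S h)" using SR finR finite_subset by blast
  define G where "G r t = integral {0..t} (c r)" for r t
  define ld where "ld F r = (\<Sum>h\<in>{h\<in>Com. r \<in> S h}. F (h,r))" for F :: "'b \<times> 'a \<Rightarrow> real" and r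
  define \<Phi> where "\<Phi> F = (\<Sum>r\<in>Res. G r (ld F r))" for F
  define B where "B p = (if fst p \<in> Com \<and> snd p \<in> S (fst p) then {0..\<mu> (fst p)} else {0::real})" for p
  define K where "K = {F. \<forall>p. F p \<in> B p} \<inter> {F. \<forall>h\<in>Com. (\<Sum>r\<in>S h. F (h,r)) = \<mu> h}"
  define M where "M = (\<Sum>h\<in>Com. \<mu> h)"
  have cK: "compact K"
    unfolding K_def
    by (rule compact_Int_closed[OF compact_box_fun closed_sum_eq]) (auto simp: B_def)
  have KB: "F (h,r) \<in> {0..\<mu> h}" if "F \<in> K" "h \<in> Com" "r \<in> S h" for F h r
  proof -
    have "F (h,r) \<in> B (h,r)" using that(1) by (simp add: K_def)
    then show ?thesis using that by (simp add: B_def)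
  qed
  have Kpos: "F (h,r) \<ge> 0" if "F \<in> K" "h \<in> Com" "r \<in> S h" for F h r
    using KB[OF that] by simp
  have Kle: "F (h,r) \<le> \<mu> h" if "F \<in> K" "h \<in> Com" "r \<in> S h" for F h r
    using KB[OF that] by simp
  have Ksum: "(\<Sum>r\<in>S h. F (h,r)) = \<mu> h" if "F \<in> K" "h \<in> Com" for F h
    using that by (simp add: K_def)
  have ld_nonneg: "ld F r \<ge> 0" if "F \<in> K" for F r
    unfolding ld_def using Kpos[OF that] by (auto intro!: sum_nonneg)
  have ld_le: "ld F r \<le> M" if "F \<in> K" for F r
  proof -
    have "ld F r \<le> (\<Sum>h\<in>{h\<in>Com. r \<in> S h}. \<mu> h)"
      unfolding ld_def using Kle[OF that] by (auto intro!: sum_mono)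
    also have "\<dots> \<le> M" unfolding M_def
      by (rule sum_mono2[OF finC]) (use mu in auto)
    finally show ?thesis .
  qed
  define r0 where "r0 h = (SOME r. r \<in> S h)" for h
  have r0S: "h \<in> Com \<Longrightarrow> r0 h \<in> S h" for h
    unfolding r0_def using Sne by (meson ex_in_conv someI_ex)
  define F0 where "F0 p = (if fst p \<in> Com \<and> snd p = r0 (fst p) then \<mu> (fst p) else 0)" for p
  have "F0 \<in> K"
  proof -
    have "F0 p \<in> B p" for p
      using r0S mu by (auto simp: F0_def B_def)
    moreover have "(\<Sum>r\<in>S h. F0 (h,r)) = \<mu> h" if "h \<in> Com" for h
    proof -
      have "(\<Sum>r\<in>S h. F0 (h,r)) = (\<Sum>r\<in>S h. if r = r0 h then \<mu> h else 0)"
        using that by (auto simp: F0_def intro!: sum.cong)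
      also have "\<dots> = \<mu> h" using finS[OF that] r0S[OF that] by (simp add: sum.delta')
      finally show ?thesis .
    qed
    ultimately show ?thesis by (auto simp: K_def)
  qed
  then have Kne: "K \<noteq> {}" by auto
  have ldcont: "continuous_on UNIV (\<lambda>F. ld F r)" for r
    unfolding ld_def by (auto intro!: continuous_on_sum)
  have contPhi: "continuous_on K \<Phi>"
    unfolding \<Phi>_def
  proof (rule continuous_on_sum)
    fix r assume r: "r \<in> Res"
    show "continuous_on K (\<lambda>F. G r (ld F r))"
      apply (rule continuous_on_compose2[OF _ continuous_on_subset[OF ldcont[of r]], where t="{0..M}"])
      using G_cont[OF contc[OF r], of M] ld_nonneg ld_le by (auto simp: G_def)
  qed
  obtain F where FK: "F \<in> K" and Fmin: "\<And>F'. F' \<in> K \<Longrightarrow> \<Phi> F \<le> \<Phi> F'"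
    using continuous_attains_inf[OF cK Kne contPhi] by blast
  define f where "f h r = F (h,r)" for h r
  have loadf: "load Com S f r = ld F r" for r
    by (simp add: load_def ld_def f_def)
  have key: "c r (ld F r) \<le> c s (ld F s)"
    if h: "h \<in> Com" and r: "r \<in> S h" and s: "s \<in> S h" and pos: "F (h,r) > 0" for h r s
  proof (rule ccontr)
    assume "\<not> ?thesis"
    then have lt: "c s (ld F s) < c r (ld F r)" by simp
    then have rs: "r \<noteq> s" by auto
    define a where "a = ld F r"
    define b where "b = ld F s"
    have rR: "r \<in> Res" and sR: "s \<in> Res" using SR h r s by auto
    have b0: "b \<ge> 0" unfolding b_def using ld_nonneg[OF FK] .
    have Fa: "F (h,r) \<le> a"
      unfolding a_def ld_def
      by (rule member_le_sum) (use h r Kpos[OF FK] finC in auto)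
    define \<delta> where "\<delta> = (c r a - c s b) / 2"
    have \<delta>: "\<delta> > 0" using lt by (simp add: \<delta>_def a_def b_def)
    obtain \<eta>1 where \<eta>1: "\<eta>1 > 0" "\<And>t. t \<in> {0..} \<Longrightarrow> dist t b < \<eta>1 \<Longrightarrow> dist (c s t) (c s b) < \<delta>"
      using contc[OF sR] b0 \<delta> unfolding continuous_on_iff by (metis atLeast_iff)
    obtain \<eta>2 where \<eta>2: "\<eta>2 > 0" "\<And>t. t \<in> {0..} \<Longrightarrow> dist t a < \<eta>2 \<Longrightarrow> dist (c r t) (c r a) < \<delta>"
      using contc[OF rR] ld_nonneg[OF FK] \<delta> unfolding continuous_on_iff a_def by (metis atLeast_iff)
    define \<epsilon> where "\<epsilon> = min (F (h,r)) (min (\<eta>1/2) (\<eta>2/2))"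
    have \<epsilon>: "\<epsilon> > 0" "\<epsilon> \<le> F (h,r)" "\<epsilon> < \<eta>1" "\<epsilon> < \<eta>2"
      using pos \<eta>1 \<eta>2 by (auto simp: \<epsilon>_def)
    define F' where "F' p = F p + (if p = (h,s) then \<epsilon> else 0) - (if p = (h,r) then \<epsilon> else 0)" for p
    have ld': "ld F' q = ld F q + (if q = s then \<epsilon> else 0) - (if q = r then \<epsilon> else 0)" for q
    proof -
      have "ld F' q = ld F q + (\<Sum>h'\<in>{h'\<in>Com. q \<in> S h'}. if h' = h \<and> q = s then \<epsilon> else 0)
                     - (\<Sum>h'\<in>{h'\<in>Com. q \<in> S h'}. if h' = h \<and> q = r then \<epsilon> else 0)"
        unfolding ld_def F'_def by (simp add: sum.distrib sum_subtractf)
      also have "\<dots> = ld F q + (if q = s then \<epsilon> else 0) - (if q = r then \<epsilon> else 0)"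
        using finC h r s by (simp add: sum.delta' conj_commute)
      finally show ?thesis .
    qed
    have "F (h,r) + F (h,s) \<le> \<mu> h"
    proof -
      have "(\<Sum>q\<in>{r,s}. F (h,q)) \<le> (\<Sum>q\<in>S h. F (h,q))"
        by (rule sum_mono2) (use finS[OF h] r s Kpos[OF FK h] in auto)
      then show ?thesis using Ksum[OF FK h] rs by simp
    qed
    have F'K: "F' \<in> K"
    proof -
      have "F' p \<in> B p" for p
      proof -
        have "F p \<in> B p" using FK unfolding K_def by blast
        then show ?thesis
          using \<epsilon> \<open>F (h,r) + F (h,s) \<le> \<mu> h\<close> rs h r s Kpos[OF FK h s]
          by (auto simp: F'_def B_def)
      qed
      moreover have "(\<Sum>q\<in>S h'. F' (h',q)) = \<mu> h'" if h': "h' \<in> Com" for h'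
      proof -
        have "(\<Sum>q\<in>S h'. F' (h',q)) = (\<Sum>q\<in>S h'. F (h',q)) + (\<Sum>q\<in>S h'. if h' = h \<and> q = s then \<epsilon> else 0)
                     - (\<Sum>q\<in>S h'. if h' = h \<and> q = r then \<epsilon> else 0)"
          unfolding F'_def by (simp add: sum.distrib sum_subtractf)
        also have "\<dots> = \<mu> h'"
          using finS[OF h'] r s Ksum[OF FK h'] by (cases "h' = h") (simp_all add: sum.delta')
        finally show ?thesis .
      qed
      ultimately show ?thesis by (auto simp: K_def)
    qed
    have "\<Phi> F' = \<Phi> F + (G s (b + \<epsilon>) - G s b) + (G r (a - \<epsilon>) - G r a)"
    proof -
      have "G q (ld F' q) = G q (ld F q) + (if q = s then G s (b + \<epsilon>) - G s b else 0)
               + (if q = r then G r (a - \<epsilon>) - G r a else 0)" for q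
        using rs by (auto simp: ld' a_def b_def)
      then have "\<Phi> F' = (\<Sum>q\<in>Res. G q (ld F q) + (if q = s then G s (b + \<epsilon>) - G s b else 0)
               + (if q = r then G r (a - \<epsilon>) - G r a else 0))"
        unfolding \<Phi>_def by simp
      also have "\<dots> = \<Phi> F + (G s (b + \<epsilon>) - G s b) + (G r (a - \<epsilon>) - G r a)"
        using finR rR sR by (simp add: sum.distrib \<Phi>_def sum.delta')
      finally show ?thesis .
    qed
    moreover have "G s (b + \<epsilon>) - G s b \<le> c s (b + \<epsilon>) * \<epsilon>"
      using G_diff(2)[OF contc[OF sR] monoc[OF sR] b0, of "b + \<epsilon>"] \<epsilon> by (simp add: G_def)
    moreover have "c r (a - \<epsilon>) * \<epsilon> \<le> G r a - G r (a - \<epsilon>)"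
      using G_diff(1)[OF contc[OF rR] monoc[OF rR], of "a - \<epsilon>" a] \<epsilon> Fa by (simp add: G_def)
    moreover have "c s (b + \<epsilon>) < c s b + \<delta>"
      using \<eta>1(2)[of "b + \<epsilon>"] \<epsilon> b0 by (auto simp: dist_real_def)
    moreover have "c r a - \<delta> < c r (a - \<epsilon>)"
      using \<eta>2(2)[of "a - \<epsilon>"] \<epsilon> Fa by (auto simp: dist_real_def)
    ultimately have "\<Phi> F' < \<Phi> F"
    proof -
      assume A: "\<Phi> F' = \<Phi> F + (G s (b + \<epsilon>) - G s b) + (G r (a - \<epsilon>) - G r a)"
        and B1: "G s (b + \<epsilon>) - G s b \<le> c s (b + \<epsilon>) * \<epsilon>"
        and B2: "c r (a - \<epsilon>) * \<epsilon> \<le> G r a - G r (a - \<epsilon>)"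
        and C1: "c s (b + \<epsilon>) < c s b + \<delta>" and C2: "c r a - \<delta> < c r (a - \<epsilon>)"
      have "c s (b + \<epsilon>) * \<epsilon> < (c s b + \<delta>) * \<epsilon>" using C1 \<epsilon> by simp
      moreover have "(c r a - \<delta>) * \<epsilon> < c r (a - \<epsilon>) * \<epsilon>" using C2 \<epsilon> by simp
      moreover have "(c s b + \<delta>) * \<epsilon> = (c r a - \<delta>) * \<epsilon>" by (simp add: \<delta>_def field_simps)
      ultimately show ?thesis using A B1 B2 by linarith
    qed
    with Fmin[OF F'K] show False by simp
  qed
  show ?thesis
  proof (intro exI[of _ f])
    show "wardrop_eq c Com S \<mu> f"
      unfolding wardrop_eq_def feasible_flow_def
    proof (intro conjI)
      show "\<forall>h\<in>Com. (\<forall>r\<in>S h. 0 \<le> f h r) \<and> (\<Sum>r\<in>S h. f h r) = \<mu> h"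
        using Kpos[OF FK] Ksum[OF FK] by (simp add: f_def)
      show "\<forall>h\<in>Com. \<exists>lam. \<forall>r\<in>S h. (0 < f h r \<longrightarrow> c r (load Com S f r) = lam) \<and> lam \<le> c r (load Com S f r)"
      proof
      fix h assume h: "h \<in> Com"
      define lam where "lam = Min ((\<lambda>r. c r (ld F r)) ` S h)"
      have "\<forall>r\<in>S h. (0 < f h r \<longrightarrow> c r (load Com S f r) = lam) \<and> lam \<le> c r (load Com S f r)"
      proof
        fix r assume r: "r \<in> S h"
        have le: "lam \<le> c r (ld F r)" unfolding lam_def using finS[OF h] r by simp
        moreover have "0 < f h r \<longrightarrow> c r (ld F r) \<le> lam"
        proof
          assume "0 < f h r"
          obtain s where s: "s \<in> S h" "lam = c s (ld F s)"
          proof -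
            have "lam \<in> (\<lambda>r. c r (ld F r)) ` S h"
              unfolding lam_def by (rule Min_in) (use finS[OF h] Sne[OF h] in auto)
            then show ?thesis using that by blast
          qed
          show "c r (ld F r) \<le> lam" using key[OF h r s(1)] \<open>0 < f h r\<close> s(2) by (simp add: f_def)
        qed
        ultimately show "(0 < f h r \<longrightarrow> c r (load Com S f r) = lam) \<and> lam \<le> c r (load Com S f r)"
          by (auto simp: loadf)
      qed
      then show "\<exists>lam. \<forall>r\<in>S h. (0 < f h r \<longrightarrow> c r (load Com S f r) = lam) \<and> lam \<le> c r (load Com S f r)"
        by blast
    qed
    qed
  qed
qed

lemma game_facts:
  assumes "singleton_game Res c Com S"
  shows "finite Res" "finite Com" "\<And>r. r \<in> Res \<Longrightarrow> continuous_on {0..} (c r)"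
    "\<And>r. r \<in> Res \<Longrightarrow> mono_on {0..} (c r)" "\<And>h. h \<in> Com \<Longrightarrow> S h \<noteq> {}"
    "\<And>h. h \<in> Com \<Longrightarrow> S h \<subseteq> Res" "\<And>h. h \<in> Com \<Longrightarrow> finite (S h)"
  using assms unfolding singleton_game_def by (auto dest: finite_subset)

lemma wmin:
  assumes game: "singleton_game Res c Com S" and w: "wardrop_eq c Com S \<mu> f" and h: "h \<in> Com"
  shows "\<And>r. r \<in> S h \<Longrightarrow> Min ((\<lambda>r. c r (load Com S f r)) ` S h) \<le> c r (load Com S f r)"
    and "\<And>r. r \<in> S h \<Longrightarrow> f h r > 0 \<Longrightarrow> c r (load Com S f r) = Min ((\<lambda>r. c r (load Com S f r)) ` S h)"
    and "\<And>r. r \<in> S h \<Longrightarrow> f h r \<ge> 0"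
    and "(\<Sum>r\<in>S h. f h r) = \<mu> h"
proof -
  note gf = game_facts[OF game]
  have feas: "\<forall>r\<in>S h. f h r \<ge> 0" "(\<Sum>r\<in>S h. f h r) = \<mu> h"
    using w h unfolding wardrop_eq_def feasible_flow_def by blast+
  show "Min ((\<lambda>r. c r (load Com S f r)) ` S h) \<le> c r (load Com S f r)" if "r \<in> S h" for r
    by (rule Min_le) (use gf(7)[OF h] that in auto)
  show "f h r \<ge> 0" if "r \<in> S h" for r using feas that by blast
  show "(\<Sum>r\<in>S h. f h r) = \<mu> h" using feas by blast
  have "\<forall>h\<in>Com. \<exists>lam::real. \<forall>r\<in>S h. (f h r > 0 \<longrightarrow> c r (load Com S f r) = lam) \<and> c r (load Com S f r) \<ge> lam"
    using w unfolding wardrop_eq_def by (rule conjunct2)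
  then have "\<exists>lam::real. \<forall>r\<in>S h. (f h r > 0 \<longrightarrow> c r (load Com S f r) = lam) \<and> c r (load Com S f r) \<ge> lam"
    using h by (rule bspec)
  then obtain lam where lam: "\<forall>r\<in>S h. (f h r > 0 \<longrightarrow> c r (load Com S f r) = lam) \<and> c r (load Com S f r) \<ge> lam" ..
  show "c r (load Com S f r) = Min ((\<lambda>r. c r (load Com S f r)) ` S h)" if "r \<in> S h" "f h r > 0" for r
  proof (rule antisym)
    show "Min ((\<lambda>r. c r (load Com S f r)) ` S h) \<le> c r (load Com S f r)"
      by (rule Min_le) (use gf(7)[OF h] that in auto)
    have "c r (load Com S f r) = lam" using bspec[OF lam that(1)] that(2) by (elim conjE mp)
    moreover have "lam \<le> Min ((\<lambda>r. c r (load Com S f r)) ` S h)"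
    proof (rule Min.boundedI)
      show "finite ((\<lambda>r. c r (load Com S f r)) ` S h)" using gf(7)[OF h] by simp
      show "(\<lambda>r. c r (load Com S f r)) ` S h \<noteq> {}" using gf(5)[OF h] by simp
      fix a assume "a \<in> (\<lambda>r. c r (load Com S f r)) ` S h"
      then obtain r' where r': "r' \<in> S h" "a = c r' (load Com S f r')" by blast
      have "lam \<le> c r' (load Com S f r')" using bspec[OF lam r'(1)] by (elim conjE)
      then show "lam \<le> a" using r'(2) by simp
    qed
    ultimately show "c r (load Com S f r) \<le> Min ((\<lambda>r. c r (load Com S f r)) ` S h)" by simp
  qed
qed


lemma load_nonneg:
  assumes "wardrop_eq c Com S \<mu> f"
  shows "load Com S f r \<ge> 0"
proof -
  have "\<forall>h\<in>Com. \<forall>r\<in>S h. f h r \<ge> 0" using assms unfolding wardrop_eq_def feasible_flow_def by blast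
  then show ?thesis unfolding load_def by (intro sum_nonneg) auto
qed

lemma swap_game:
  assumes game: "singleton_game Res c Com S"
  shows "(\<Sum>h\<in>Com. \<Sum>r\<in>S h. \<phi> h r) = (\<Sum>r\<in>Res. \<Sum>h\<in>{h\<in>Com. r \<in> S h}. \<phi> h r)"
proof -
  note gf = game_facts[OF game]
  have "(\<Sum>h\<in>Com. \<Sum>r\<in>S h. \<phi> h r) = (\<Sum>h\<in>Com. \<Sum>r\<in>{r. r \<in> Res \<and> r \<in> S h}. \<phi> h r)"
    by (rule sum.cong) (use gf(6) in \<open>auto intro!: sum.cong\<close>)
  also have "\<dots> = (\<Sum>r\<in>Res. \<Sum>h\<in>{h. h \<in> Com \<and> r \<in> S h}. \<phi> h r)"
    by (rule sum.swap_restrict) (use gf in auto)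
  finally show ?thesis by simp
qed

lemma cost_unique:
  assumes game: "singleton_game Res c Com S"
    and wf: "wardrop_eq c Com S \<mu> f" and wg: "wardrop_eq c Com S \<mu> g"
  shows "\<forall>r\<in>Res. c r (load Com S f r) = c r (load Com S g r)"
proof -
  note gf = game_facts[OF game]
  have T: "(\<Sum>r\<in>Res. c r (load Com S f r) * (load Com S g r - load Com S f r)) \<ge> 0"
    if wf: "wardrop_eq c Com S \<mu> f" and wg: "wardrop_eq c Com S \<mu> g" for f g
  proof -
    let ?L = "\<lambda>h. Min ((\<lambda>r. c r (load Com S f r)) ` S h)"
    have "(\<Sum>r\<in>Res. c r (load Com S f r) * (load Com S g r - load Com S f r))
        = (\<Sum>r\<in>Res. \<Sum>h\<in>{h\<in>Com. r \<in> S h}. c r (load Com S f r) * (g h r - f h r))"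
      unfolding load_def[of Com S g] load_def[of Com S f] sum_subtractf[symmetric] sum_distrib_left ..
    also have "\<dots> = (\<Sum>h\<in>Com. \<Sum>r\<in>S h. c r (load Com S f r) * (g h r - f h r))"
      by (rule swap_game[OF game, symmetric])
    also have "\<dots> \<ge> (\<Sum>h\<in>Com. \<Sum>r\<in>S h. ?L h * (g h r - f h r))"
    proof (rule sum_mono, rule sum_mono)
      fix h r assume h: "h \<in> Com" and r: "r \<in> S h"
      note A = wmin[OF game wf h] and Bg = wmin[OF game wg h]
      show "?L h * (g h r - f h r) \<le> c r (load Com S f r) * (g h r - f h r)"
      proof (cases "f h r > 0")
        case True then show ?thesis using A(2)[OF r] by simp
      next
        case False
        then have "f h r = 0" using A(3)[OF r] by simp
        then show ?thesis using A(1)[OF r] Bg(3)[OF r] by (simp add: mult_right_mono)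
      qed
    qed
    also have "(\<Sum>h\<in>Com. \<Sum>r\<in>S h. ?L h * (g h r - f h r)) = 0"
    proof (rule sum.neutral, rule ballI)
      fix h assume h: "h \<in> Com"
      show "(\<Sum>r\<in>S h. ?L h * (g h r - f h r)) = 0"
        using wmin(4)[OF game wf h] wmin(4)[OF game wg h]
        by (simp add: sum_distrib_left[symmetric] sum_subtractf)
    qed
    finally show ?thesis .
  qed
  define x where "x r = load Com S f r" for r
  define y where "y r = load Com S g r" for r
  have s: "(\<Sum>r\<in>Res. (c r (y r) - c r (x r)) * (y r - x r)) \<le> 0"
  proof -
    have e: "(c r (y r) - c r (x r)) * (y r - x r) = -(c r (x r) * (y r - x r) + c r (y r) * (x r - y r))" for r
      by (simp add: algebra_simps)
    have "(\<Sum>r\<in>Res. (c r (y r) - c r (x r)) * (y r - x r)) =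
          - ((\<Sum>r\<in>Res. c r (x r) * (y r - x r)) + (\<Sum>r\<in>Res. c r (y r) * (x r - y r)))"
      unfolding e sum_negf sum.distrib ..
    then show ?thesis using T[OF wf wg] T[OF wg wf] by (simp add: x_def y_def)
  qed
  have nn: "\<forall>r\<in>Res. (c r (y r) - c r (x r)) * (y r - x r) \<ge> 0"
  proof
    fix r assume r: "r \<in> Res"
    have x0: "x r \<ge> 0" and y0: "y r \<ge> 0" using load_nonneg wf wg by (auto simp: x_def y_def)
    show "(c r (y r) - c r (x r)) * (y r - x r) \<ge> 0"
    proof (cases "x r \<le> y r")
      case True
      then have "c r (x r) \<le> c r (y r)" using mono_onD[OF gf(4)[OF r]] x0 y0 by auto
      then show ?thesis using True by simp
    next
      case False
      then have "c r (y r) \<le> c r (x r)" using mono_onD[OF gf(4)[OF r]] x0 y0 by auto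
      then show ?thesis using False by (simp add: mult_nonpos_nonpos)
    qed
  qed
  have z: "\<forall>r\<in>Res. (c r (y r) - c r (x r)) * (y r - x r) = 0"
    using sum_nonneg_eq_0_iff[OF gf(1), of "\<lambda>r. (c r (y r) - c r (x r)) * (y r - x r)"] nn s
    by (simp add: sum_nonneg antisym)
  show ?thesis
  proof
    fix r assume "r \<in> Res"
    then have "(c r (y r) - c r (x r)) * (y r - x r) = 0" using z by blast
    then show "c r (load Com S f r) = c r (load Com S g r)" by (auto simp: x_def y_def)
  qed
qed

lemma eq_cost_val:
  assumes game: "singleton_game Res c Com S" and w: "wardrop_eq c Com S \<mu> f" and h: "h \<in> Com"
  shows "eq_cost c Com S \<mu> h = Min ((\<lambda>r. c r (load Com S f r)) ` S h)"
  unfolding eq_cost_def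
proof (rule the_equality)
  show "\<exists>f'. wardrop_eq c Com S \<mu> f' \<and> Min ((\<lambda>r. c r (load Com S f r)) ` S h) = Min ((\<lambda>r. c r (load Com S f' r)) ` S h)"
    using w by blast
  fix l assume "\<exists>g. wardrop_eq c Com S \<mu> g \<and> l = Min ((\<lambda>r. c r (load Com S g r)) ` S h)"
  then obtain g where g: "wardrop_eq c Com S \<mu> g" and l: "l = Min ((\<lambda>r. c r (load Com S g r)) ` S h)"
    by blast
  have cu: "\<forall>r\<in>Res. c r (load Com S f r) = c r (load Com S g r)" by (rule cost_unique[OF game w g])
  have "(\<lambda>r. c r (load Com S g r)) ` S h = (\<lambda>r. c r (load Com S f r)) ` S h"
  proof (rule image_cong[OF refl])
    fix r assume "r \<in> S h"
    then have "r \<in> Res" using game_facts(6)[OF game h] by blast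
    then show "c r (load Com S g r) = c r (load Com S f r)" using cu by simp
  qed
  then show "l = Min ((\<lambda>r. c r (load Com S f r)) ` S h)" using l by simp
qed

definition sgl :: "'r set \<Rightarrow> ('r \<Rightarrow> real \<Rightarrow> real) \<Rightarrow> real \<Rightarrow> ('r \<Rightarrow> real) \<Rightarrow> bool" where
  "sgl RC c d x \<longleftrightarrow> (\<forall>r\<in>RC. x r \<ge> 0) \<and> (\<Sum>r\<in>RC. x r) = d \<and>
     (\<exists>lam. \<forall>r\<in>RC. (x r > 0 \<longrightarrow> c r (x r) = lam) \<and> c r (x r) \<ge> lam)"

lemma load_single: "r \<in> RC \<Longrightarrow> load {()} (\<lambda>_. RC) g r = g () r"
  unfolding load_def by (simp add: UNIV_unit)

lemma eq_load_single_iff: "eq_load_single RC c d x \<longleftrightarrow> sgl RC c d x"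
proof
  assume "eq_load_single RC c d x"
  then obtain g where w: "wardrop_eq c {()} (\<lambda>_. RC) (\<lambda>_. d) g"
    and xg: "\<forall>r\<in>RC. x r = load {()} (\<lambda>_. RC) g r"
    unfolding eq_load_single_def eq_load_def by blast
  have xg': "\<forall>r\<in>RC. x r = g () r" using xg load_single by metis
  have f1: "\<forall>r\<in>RC. g () r \<ge> 0" and f2: "(\<Sum>r\<in>RC. g () r) = d"
    using w unfolding wardrop_eq_def feasible_flow_def by simp_all
  have "\<exists>lam::real. \<forall>r\<in>RC. (g () r > 0 \<longrightarrow> c r (load {()} (\<lambda>_. RC) g r) = lam) \<and> c r (load {()} (\<lambda>_. RC) g r) \<ge> lam"
    using w unfolding wardrop_eq_def by simp
  then obtain lam where lam: "\<forall>r\<in>RC. (g () r > 0 \<longrightarrow> c r (load {()} (\<lambda>_. RC) g r) = lam) \<and> c r (load {()} (\<lambda>_. RC) g r) \<ge> lam" ..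
  have "\<forall>r\<in>RC. (x r > 0 \<longrightarrow> c r (x r) = lam) \<and> c r (x r) \<ge> lam"
  proof
    fix r assume r: "r \<in> RC"
    show "(x r > 0 \<longrightarrow> c r (x r) = lam) \<and> c r (x r) \<ge> lam"
      using bspec[OF lam r] load_single[OF r, of g] bspec[OF xg' r] by simp
  qed
  moreover have "\<forall>r\<in>RC. x r \<ge> 0" using f1 xg' by simp
  moreover have "(\<Sum>r\<in>RC. x r) = d" using f2 xg' by simp
  ultimately show "sgl RC c d x" unfolding sgl_def by blast
next
  assume s: "sgl RC c d x"
  define g where "g = (\<lambda>(_::unit) r. x r)"
  have ld: "\<And>r. r \<in> RC \<Longrightarrow> load {()} (\<lambda>_. RC) g r = x r" using load_single by (simp add: g_def)
  obtain lam where lam: "\<forall>r\<in>RC. (x r > 0 \<longrightarrow> c r (x r) = lam) \<and> c r (x r) \<ge> lam"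
    using s unfolding sgl_def by blast
  have "wardrop_eq c {()} (\<lambda>_. RC) (\<lambda>_. d) g"
    unfolding wardrop_eq_def feasible_flow_def
  proof (intro conjI)
    show "\<forall>h\<in>{()}. (\<forall>r\<in>RC. 0 \<le> g h r) \<and> (\<Sum>r\<in>RC. g h r) = d"
      using s unfolding sgl_def g_def by simp
    have "\<forall>r\<in>RC. (0 < g () r \<longrightarrow> c r (load {()} (\<lambda>_. RC) g r) = lam) \<and> lam \<le> c r (load {()} (\<lambda>_. RC) g r)"
      using lam ld by (simp add: g_def)
    then show "\<forall>h\<in>{()}. \<exists>lam. \<forall>r\<in>RC. (0 < g h r \<longrightarrow> c r (load {()} (\<lambda>_. RC) g r) = lam) \<and> lam \<le> c r (load {()} (\<lambda>_. RC) g r)"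
      by auto
  qed
  then show "eq_load_single RC c d x"
    unfolding eq_load_single_def eq_load_def using ld by auto
qed

lemma part_a:
  assumes game: "singleton_game Res c Com S"
    and wo: "weak_order_on Com le"
    and cls: "cost_class Com le C"
    and mu: "\<mu> \<in> Gamma_region c Com S le"
    and xe: "eq_load Res c Com S \<mu> x"
  shows "sgl (res_C Com S le C) c (\<Sum>h\<in>C. \<mu> h) x"
proof -
  note gf = game_facts[OF game]
  obtain f where w: "wardrop_eq c Com S \<mu> f" and xf: "\<forall>r\<in>Res. x r = load Com S f r"
    using xe unfolding eq_load_def by blast
  define L where "L r = load Com S f r" for r
  define lm where "lm h = Min ((\<lambda>r. c r (L r)) ` S h)" for h
  have eqc: "eq_cost c Com S \<mu> h = lm h" if "h \<in> Com" for h
    using eq_cost_val[OF game w that] by (simp add: lm_def L_def)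
  have ord: "lm h \<le> lm h' \<longleftrightarrow> le h h'" if "h \<in> Com" "h' \<in> Com" for h h'
    using mu that eqc unfolding Gamma_region_def by auto
  have total: "le h h' \<or> le h' h" if "h \<in> Com" "h' \<in> Com" for h h'
    using wo that unfolding weak_order_on_def by blast
  have trans: "le h1 h3" if "le h1 h2" "le h2 h3" "h1 \<in> Com" "h2 \<in> Com" "h3 \<in> Com" for h1 h2 h3
    using wo that unfolding weak_order_on_def by blast
  obtain h0 where h0: "h0 \<in> Com" and Cdef: "C = {h\<in>Com. le h h0 \<and> le h0 h}"
    using cls unfolding cost_class_def by blast
  have CCom: "C \<subseteq> Com" using Cdef by blast
  have lmC: "lm h = lm h0" if "h \<in> C" for h
    using ord[of h h0] ord[of h0 h] that h0 Cdef by auto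
  define RC where "RC = res_C Com S le C"
  have RCdef: "r \<in> RC \<longleftrightarrow> (\<exists>h\<in>C. r \<in> S h) \<and> (\<forall>h'\<in>above_class Com le C. r \<notin> S h')" for r
    unfolding RC_def res_C_def by blast
  have RCRes: "RC \<subseteq> Res" using RCdef CCom gf(6) by blast
  have finRC: "finite RC" using RCRes gf(1) finite_subset by blast
  have W1: "lm h \<le> c r (L r)" if "h \<in> Com" "r \<in> S h" for h r
    using wmin(1)[OF game w that(1) that(2)] by (simp add: lm_def L_def)
  have W2: "c r (L r) = lm h" if "h \<in> Com" "r \<in> S h" "f h r > 0" for h r
    using wmin(2)[OF game w that] by (simp add: lm_def L_def)
  have W3: "f h r \<ge> 0" if "h \<in> Com" "r \<in> S h" for h r
    using wmin(3)[OF game w that] .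
  have W4: "(\<Sum>r\<in>S h. f h r) = \<mu> h" if "h \<in> Com" for h
    using wmin(4)[OF game w that] .
  have i: "h \<in> C" if r: "r \<in> RC" and h: "h \<in> Com" and rh: "r \<in> S h" and pos: "f h r > 0" for r h
  proof (rule ccontr)
    assume hC: "h \<notin> C"
    obtain h1 where h1: "h1 \<in> C" "r \<in> S h1" using RCdef r by blast
    have "lm h0 \<le> c r (L r)" using W1[of h1 r] h1 CCom lmC by auto
    moreover have cr: "c r (L r) = lm h" using W2[OF h rh pos] .
    ultimately have "lm h0 \<le> lm h" by simp
    then have "le h0 h" using ord[OF h0 h] by simp
    then have "\<not> le h h0" using hC h Cdef by blast
    have "h \<in> above_class Com le C"
      unfolding above_class_def
    proof (intro CollectI conjI h ballI)
      fix k assume k: "k \<in> C"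
      then have kk: "k \<in> Com" "le k h0" "le h0 k" using Cdef by auto
      show "le k h" using trans[OF kk(2) \<open>le h0 h\<close> kk(1) h0 h] .
      show "\<not> le h k" using trans[of h k h0] kk \<open>\<not> le h h0\<close> h h0 by blast
    qed
    then show False using RCdef r rh by blast
  qed
  have ii: "r \<in> RC" if h: "h \<in> C" and rh: "r \<in> S h" and pos: "f h r > 0" for r h
  proof -
    have hCom: "h \<in> Com" using h CCom by blast
    have "r \<notin> S h'" if h': "h' \<in> above_class Com le C" for h'
    proof
      assume rh': "r \<in> S h'"
      have h'Com: "h' \<in> Com" and nle: "\<not> le h' h" using h' h unfolding above_class_def by auto
      have "lm h < lm h'" using ord[OF h'Com hCom] nle by simp
      moreover have "lm h' \<le> c r (L r)" using W1[OF h'Com rh'] .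
      moreover have "c r (L r) = lm h" using W2[OF hCom rh pos] .
      ultimately show False by simp
    qed
    then show ?thesis using RCdef h rh by blast
  qed
  have xL: "x r = L r" if "r \<in> RC" for r using xf RCRes that by (auto simp: L_def)
  have Lnn: "L r \<ge> 0" for r unfolding L_def by (rule load_nonneg[OF w])
  have "(\<Sum>r\<in>RC. L r) = (\<Sum>r\<in>RC. \<Sum>h\<in>{h. h \<in> Com \<and> r \<in> S h}. f h r)"
    by (simp add: L_def load_def)
  also have "\<dots> = (\<Sum>h\<in>Com. \<Sum>r\<in>{r. r \<in> RC \<and> r \<in> S h}. f h r)"
    by (rule sum.swap_restrict[symmetric]) (use gf(2) finRC in auto)
  also have "\<dots> = (\<Sum>h\<in>Com. if h \<in> C then \<mu> h else 0)"
  proof (rule sum.cong[OF refl])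
    fix h assume h: "h \<in> Com"
    show "(\<Sum>r\<in>{r. r \<in> RC \<and> r \<in> S h}. f h r) = (if h \<in> C then \<mu> h else 0)"
    proof (cases "h \<in> C")
      case True
      have "(\<Sum>r\<in>{r. r \<in> RC \<and> r \<in> S h}. f h r) = (\<Sum>r\<in>S h. f h r)"
      proof (rule sum.mono_neutral_left)
        show "finite (S h)" using gf(7)[OF h] .
        show "{r. r \<in> RC \<and> r \<in> S h} \<subseteq> S h" by blast
        show "\<forall>r\<in>S h - {r. r \<in> RC \<and> r \<in> S h}. f h r = 0"
        proof
          fix r assume "r \<in> S h - {r. r \<in> RC \<and> r \<in> S h}"
          then have rS: "r \<in> S h" and nr: "r \<notin> RC" by auto
          have "\<not> f h r > 0" using ii[OF True rS] nr by blast
          then show "f h r = 0" using W3[OF h rS] by simp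
        qed
      qed
      then show ?thesis using True W4[OF h] by simp
    next
      case False
      have "f h r = 0" if "r \<in> {r. r \<in> RC \<and> r \<in> S h}" for r
      proof -
        have rr: "r \<in> RC" "r \<in> S h" using that by auto
        have "\<not> f h r > 0" using i[OF rr(1) h rr(2)] False by blast
        then show ?thesis using W3[OF h rr(2)] by simp
      qed
      then show ?thesis using False by simp
    qed
  qed
  also have "\<dots> = (\<Sum>h\<in>C. \<mu> h)"
  proof -
    have "(\<Sum>h\<in>Com. if h \<in> C then \<mu> h else 0) = (\<Sum>h\<in>{h\<in>Com. h \<in> C}. \<mu> h)"
      by (rule sum.inter_filter[symmetric]) (rule gf(2))
    also have "{h\<in>Com. h \<in> C} = C" using CCom by blast
    finally show ?thesis .
  qed
  finally have sumL: "(\<Sum>r\<in>RC. L r) = (\<Sum>h\<in>C. \<mu> h)" .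
  have eqv: "\<forall>r\<in>RC. (x r > 0 \<longrightarrow> c r (x r) = lm h0) \<and> c r (x r) \<ge> lm h0"
  proof
    fix r assume r: "r \<in> RC"
    obtain h1 where h1: "h1 \<in> C" "r \<in> S h1" using RCdef r by blast
    have ge: "lm h0 \<le> c r (L r)" using W1[of h1 r] h1 CCom lmC by auto
    have "c r (L r) = lm h0" if pos: "L r > 0"
    proof -
      have "\<exists>h\<in>{h. h \<in> Com \<and> r \<in> S h}. f h r > 0"
      proof (rule ccontr)
        assume "\<not> ?thesis"
        then have "L r \<le> 0" unfolding L_def load_def by (auto intro!: sum_nonpos)
        then show False using pos by simp
      qed
      then obtain h where h: "h \<in> Com" "r \<in> S h" "f h r > 0" by blast
      have "h \<in> C" using i[OF r h] .
      then show ?thesis using W2[OF h] lmC by simp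
    qed
    then show "(x r > 0 \<longrightarrow> c r (x r) = lm h0) \<and> c r (x r) \<ge> lm h0"
      using ge xL[OF r] by simp
  qed
  show ?thesis
    unfolding sgl_def RC_def[symmetric]
    using eqv sumL xL Lnn by (auto intro: sum.cong)
qed

lemma sgl_mono:
  assumes fin: "finite RC" and mono: "\<forall>r\<in>RC. mono_on {0..} (c r)"
    and d12: "d1 \<le> d2" and sx: "sgl RC c d1 x" and sy: "sgl RC c d2 y"
    and uniq: "\<And>z. sgl RC c d1 z \<Longrightarrow> \<forall>r\<in>RC. z r = x r"
  shows "\<forall>r\<in>RC. x r \<le> y r"
proof (rule ccontr)
  assume "\<not> ?thesis"
  then obtain r0 where r0: "r0 \<in> RC" "y r0 < x r0" by (auto simp: not_le)
  have x0: "\<forall>r\<in>RC. x r \<ge> 0" and sx1: "(\<Sum>r\<in>RC. x r) = d1" using sx unfolding sgl_def by auto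
  have y0: "\<forall>r\<in>RC. y r \<ge> 0" and sy1: "(\<Sum>r\<in>RC. y r) = d2" using sy unfolding sgl_def by auto
  obtain lam1 where l1: "\<forall>r\<in>RC. (x r > 0 \<longrightarrow> c r (x r) = lam1) \<and> c r (x r) \<ge> lam1"
    using sx unfolding sgl_def by blast
  obtain lam2 where l2: "\<forall>r\<in>RC. (y r > 0 \<longrightarrow> c r (y r) = lam2) \<and> c r (y r) \<ge> lam2"
    using sy unfolding sgl_def by blast
  have cm: "c r a \<le> c r b" if "r \<in> RC" "0 \<le> a" "a \<le> b" for r a b
    using mono_onD[of "{0..}" "c r" a b] mono that by auto
  obtain s where s: "s \<in> RC" "x s < y s"
  proof (rule ccontr)
    assume "\<not> thesis"
    then have "\<forall>s\<in>RC. y s \<le> x s" using that by (meson not_less)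
    then have "(\<Sum>r\<in>RC. y r) < (\<Sum>r\<in>RC. x r)"
      by (intro sum_strict_mono_ex1[OF fin]) (use r0 in auto)
    then show False using sx1 sy1 d12 by simp
  qed
  have "lam1 = c r0 (x r0)" using bspec[OF l1 r0(1)] r0 y0 by auto
  also have "\<dots> \<ge> c r0 (y r0)" using cm[OF r0(1)] r0 y0 by auto
  finally have a1: "lam2 \<le> lam1" using bspec[OF l2 r0(1)] by linarith
  have "lam2 = c s (y s)" using bspec[OF l2 s(1)] s x0 by auto
  also have "\<dots> \<ge> c s (x s)" using cm[OF s(1)] s x0 by auto
  finally have "lam1 \<le> lam2" using bspec[OF l1 s(1)] by linarith
  with a1 have lam: "lam2 = lam1" by simp
  define mn where "mn r = min (x r) (y r)" for r
  define mx where "mx r = max (x r) (y r)" for r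
  have Smn: "(\<Sum>r\<in>RC. mn r) < d1"
    unfolding sx1[symmetric] by (rule sum_strict_mono_ex1[OF fin]) (use r0 in \<open>auto simp: mn_def intro!: bexI[of _ r0]\<close>)
  have Smx: "d2 < (\<Sum>r\<in>RC. mx r)"
    unfolding sy1[symmetric] by (rule sum_strict_mono_ex1[OF fin]) (use r0 in \<open>auto simp: mx_def intro!: bexI[of _ r0]\<close>)
  define \<theta> where "\<theta> = (d1 - (\<Sum>r\<in>RC. mn r)) / ((\<Sum>r\<in>RC. mx r) - (\<Sum>r\<in>RC. mn r))"
  have th0: "0 < \<theta>" and th1: "\<theta> < 1" using Smn Smx d12 by (auto simp: \<theta>_def field_simps)
  define w where "w r = mn r + \<theta> * (mx r - mn r)" for r
  have "(\<Sum>r\<in>RC. w r) = (\<Sum>r\<in>RC. mn r) + \<theta> * ((\<Sum>r\<in>RC. mx r) - (\<Sum>r\<in>RC. mn r))"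
    unfolding w_def by (simp add: sum.distrib sum_distrib_left[symmetric] sum_subtractf)
  also have "\<dots> = d1" using Smn Smx d12 by (simp add: \<theta>_def field_simps)
  finally have sw: "(\<Sum>r\<in>RC. w r) = d1" .
  have mnle: "mn r \<le> w r" and wle: "w r \<le> mx r" for r
  proof -
    have "mn r \<le> mx r" by (simp add: mn_def mx_def)
    then have d: "0 \<le> mx r - mn r" by simp
    have "\<theta> * (mx r - mn r) \<le> 1 * (mx r - mn r)"
      by (rule mult_right_mono) (use th1 d in auto)
    moreover have "0 \<le> \<theta> * (mx r - mn r)" using th0 d by simp
    ultimately show "mn r \<le> w r" "w r \<le> mx r" by (auto simp: w_def)
  qed
  have "sgl RC c d1 w"
    unfolding sgl_def
  proof (intro conjI exI[of _ lam1] ballI)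
    fix r assume r: "r \<in> RC"
    have mn0: "mn r \<ge> 0" using r x0 y0 by (simp add: mn_def)
    show w0: "w r \<ge> 0" using mn0 mnle[of r] by simp
    have "c r (mn r) \<ge> lam1"
      using bspec[OF l1 r] bspec[OF l2 r] lam by (cases "x r \<le> y r") (auto simp: mn_def)
    then show "c r (w r) \<ge> lam1" using cm[OF r mn0 mnle[of r]] by simp
    then show "w r > 0 \<longrightarrow> c r (w r) = lam1"
    proof -
      assume ge: "c r (w r) \<ge> lam1"
      { assume wp: "w r > 0"
        then have mxp: "mx r > 0" using wle[of r] by simp
        have "c r (mx r) = lam1"
          using bspec[OF l1 r] bspec[OF l2 r] lam mxp by (cases "x r \<le> y r") (auto simp: mx_def)
        moreover have "c r (w r) \<le> c r (mx r)" using cm[OF r w0 wle[of r]] .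
        ultimately have "c r (w r) = lam1" using ge by simp }
      then show ?thesis by blast
    qed
  qed (use sw in simp)
  then have "w r0 = x r0" using uniq r0(1) by blast
  moreover have "w r0 < x r0"
  proof -
    have "w r0 = y r0 + \<theta> * (x r0 - y r0)" using r0 by (simp add: w_def mn_def mx_def)
    also have "\<dots> < y r0 + 1 * (x r0 - y r0)" using th1 r0 by (intro add_strict_left_mono mult_strict_right_mono) auto
    finally show ?thesis by simp
  qed
  ultimately show False by simp
qed

theorem theorem4p1:
  fixes Res :: "'r set" and c :: "'r \<Rightarrow> real \<Rightarrow> real"
    and Com :: "'h set" and S :: "'h \<Rightarrow> 'r set"
    and le :: "'h \<Rightarrow> 'h \<Rightarrow> bool" and C :: "'h set"
  assumes game: "singleton_game Res c Com S"
    and wo: "weak_order_on Com le"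
    and cls: "cost_class Com le C"
  shows
    "(\<forall>\<mu>\<in>Gamma_region c Com S le. \<forall>x. eq_load Res c Com S \<mu> x \<longrightarrow>
        eq_load_single (res_C Com S le C) c (\<Sum>h\<in>C. \<mu> h) x)
     \<and>
     ((\<forall>d\<ge>0. (\<exists>x. eq_load_single (res_C Com S le C) c d x) \<and>
         (\<forall>x y. eq_load_single (res_C Com S le C) c d x \<longrightarrow>
                eq_load_single (res_C Com S le C) c d y \<longrightarrow>
                (\<forall>r\<in>res_C Com S le C. x r = y r)))
      \<longrightarrow>
        (\<forall>\<mu>\<in>Gamma_region c Com S le. \<forall>x y. eq_load Res c Com S \<mu> x \<longrightarrow> eq_load Res c Com S \<mu> y \<longrightarrow>
            (\<forall>r\<in>res_C Com S le C. x r = y r))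
      \<and> (\<exists>F :: 'r \<Rightarrow> real \<Rightarrow> real.
            (\<forall>r\<in>res_C Com S le C. mono_on {0..} (F r)) \<and>
            (\<forall>\<mu>\<in>Gamma_region c Com S le. \<forall>x. eq_load Res c Com S \<mu> x \<longrightarrow>
               (\<forall>r\<in>res_C Com S le C. x r = F r (\<Sum>h\<in>C. \<mu> h))))
      \<and> comonotonic (res_C Com S le C) (Gamma_region c Com S le) (\<lambda>r \<mu>. eq_load_val Res c Com S \<mu> r))"
proof -
  note gf = game_facts[OF game]
  define RC where "RC = res_C Com S le C"
  obtain h0 where h0: "h0 \<in> Com" and Cdef: "C = {h\<in>Com. le h h0 \<and> le h0 h}"
    using cls unfolding cost_class_def by blast
  have CCom: "C \<subseteq> Com" using Cdef by blast
  have RCRes: "RC \<subseteq> Res" unfolding RC_def res_C_def using CCom gf(6) by blast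
  have finRC: "finite RC" using RCRes gf(1) finite_subset by blast
  have monoRC: "\<forall>r\<in>RC. mono_on {0..} (c r)" using RCRes gf(4) by blast
  have A: "sgl RC c (\<Sum>h\<in>C. \<mu> h) x" if "\<mu> \<in> Gamma_region c Com S le" "eq_load Res c Com S \<mu> x" for \<mu> x
    unfolding RC_def by (rule part_a[OF game wo cls that])
  have dnn: "(\<Sum>h\<in>C. \<mu> h) \<ge> 0" if "\<mu> \<in> Gamma_region c Com S le" for \<mu>
    using that CCom unfolding Gamma_region_def by (auto intro!: sum_nonneg)
  have partA: "\<forall>\<mu>\<in>Gamma_region c Com S le. \<forall>x. eq_load Res c Com S \<mu> x \<longrightarrow>
        eq_load_single (res_C Com S le C) c (\<Sum>h\<in>C. \<mu> h) x"
    using A by (simp add: eq_load_single_iff RC_def)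
  show ?thesis
    unfolding RC_def[symmetric]
  proof (intro conjI impI)
    show "\<forall>\<mu>\<in>Gamma_region c Com S le. \<forall>x. eq_load Res c Com S \<mu> x \<longrightarrow>
        eq_load_single RC c (\<Sum>h\<in>C. \<mu> h) x" using partA by (simp add: RC_def)
    assume H: "\<forall>d\<ge>0. (\<exists>x. eq_load_single RC c d x) \<and>
         (\<forall>x y. eq_load_single RC c d x \<longrightarrow> eq_load_single RC c d y \<longrightarrow> (\<forall>r\<in>RC. x r = y r))"
    have Hex: "\<exists>x. sgl RC c d x" if "d \<ge> 0" for d using H that by (simp add: eq_load_single_iff)
    have Hun: "\<forall>r\<in>RC. x r = y r" if "d \<ge> 0" "sgl RC c d x" "sgl RC c d y" for d x y
      using H that by (simp add: eq_load_single_iff)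
    show B1: "\<forall>\<mu>\<in>Gamma_region c Com S le. \<forall>x y. eq_load Res c Com S \<mu> x \<longrightarrow> eq_load Res c Com S \<mu> y \<longrightarrow>
            (\<forall>r\<in>RC. x r = y r)"
      using Hun A dnn by blast
    define F where "F r d = (THE v. \<exists>x. sgl RC c d x \<and> x r = v)" for r d
    have Fval: "F r d = x r" if "d \<ge> 0" "sgl RC c d x" "r \<in> RC" for r d x
      unfolding F_def
    proof (rule the_equality)
      show "\<exists>x'. sgl RC c d x' \<and> x' r = x r" using that by blast
      fix v assume "\<exists>x'. sgl RC c d x' \<and> x' r = v"
      then obtain x' where "sgl RC c d x'" "x' r = v" by blast
      then show "v = x r" using Hun[OF that(1) _ that(2)] that(3) by metis
    qed
    have Fmono: "\<forall>r\<in>RC. mono_on {0..} (F r)"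
    proof (intro ballI mono_onI)
      fix r and a b :: real assume r: "r \<in> RC" and ab: "a \<in> {0..}" "b \<in> {0..}" "a \<le> b"
      obtain x where x: "sgl RC c a x" using Hex[of a] ab(1) by auto
      obtain y where y: "sgl RC c b y" using Hex[of b] ab(2) by auto
      have "\<forall>r\<in>RC. x r \<le> y r"
        by (rule sgl_mono[OF finRC monoRC ab(3) x y]) (use Hun ab x in auto)
      then show "F r a \<le> F r b" using Fval[of a x r] Fval[of b y r] ab x y r by auto
    qed
    have FA: "\<forall>\<mu>\<in>Gamma_region c Com S le. \<forall>x. eq_load Res c Com S \<mu> x \<longrightarrow>
               (\<forall>r\<in>RC. x r = F r (\<Sum>h\<in>C. \<mu> h))"
      using Fval A dnn by metis
    show "\<exists>F :: 'r \<Rightarrow> real \<Rightarrow> real. (\<forall>r\<in>RC. mono_on {0..} (F r)) \<and>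
            (\<forall>\<mu>\<in>Gamma_region c Com S le. \<forall>x. eq_load Res c Com S \<mu> x \<longrightarrow>
               (\<forall>r\<in>RC. x r = F r (\<Sum>h\<in>C. \<mu> h)))"
      using Fmono FA by blast
    have ELV: "eq_load_val Res c Com S \<mu> r = F r (\<Sum>h\<in>C. \<mu> h)"
      if mu: "\<mu> \<in> Gamma_region c Com S le" and r: "r \<in> RC" for \<mu> r
    proof -
      have "\<forall>h\<in>Com. \<mu> h \<ge> 0" using mu unfolding Gamma_region_def by auto
      then obtain f where w: "wardrop_eq c Com S \<mu> f" using existence[OF game] by blast
      have el: "eq_load Res c Com S \<mu> (\<lambda>r. load Com S f r)"
        unfolding eq_load_def using w by blast
      show ?thesis unfolding eq_load_val_def
      proof (rule the_equality)
        show "\<exists>x. eq_load Res c Com S \<mu> x \<and> x r = F r (\<Sum>h\<in>C. \<mu> h)"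
          using el FA mu r by blast
        fix v assume "\<exists>x. eq_load Res c Com S \<mu> x \<and> x r = v"
        then obtain x where "eq_load Res c Com S \<mu> x" "x r = v" by blast
        then show "v = F r (\<Sum>h\<in>C. \<mu> h)" using FA mu r by metis
      qed
    qed
    show "comonotonic RC (Gamma_region c Com S le) (\<lambda>r \<mu>. eq_load_val Res c Com S \<mu> r)"
      unfolding comonotonic_def
    proof (intro ballI)
      fix i j \<mu>1 \<mu>2 assume i: "i \<in> RC" and j: "j \<in> RC"
        and m1: "\<mu>1 \<in> Gamma_region c Com S le" and m2: "\<mu>2 \<in> Gamma_region c Com S le"
      define a where "a = (\<Sum>h\<in>C. \<mu>1 h)"
      define b where "b = (\<Sum>h\<in>C. \<mu>2 h)"
      have a0: "a \<ge> 0" and b0: "b \<ge> 0" using dnn m1 m2 by (auto simp: a_def b_def)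
      have mi: "mono_on {0..} (F i)" and mj: "mono_on {0..} (F j)" using Fmono i j by auto
      have "(F i a - F i b) * (F j a - F j b) \<ge> 0"
      proof (cases "a \<le> b")
        case True
        then have "F i a \<le> F i b" "F j a \<le> F j b"
          using mono_onD[OF mi] mono_onD[OF mj] a0 b0 by auto
        then show ?thesis by (simp add: mult_nonpos_nonpos)
      next
        case False
        then have "F i b \<le> F i a" "F j b \<le> F j a"
          using mono_onD[OF mi] mono_onD[OF mj] a0 b0 by auto
        then show ?thesis by simp
      qed
      then show "0 \<le> (eq_load_val Res c Com S \<mu>1 i - eq_load_val Res c Com S \<mu>2 i) *
                     (eq_load_val Res c Com S \<mu>1 j - eq_load_val Res c Com S \<mu>2 j)"
        using ELV[OF m1 i] ELV[OF m2 i] ELV[OF m1 j] ELV[OF m2 j] by (simp add: a_def b_def)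
    qed
  qed
qed

end
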